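(* Fix real numbers $r_1,r_2>0$ and integers $i_1,i_2>0$ with $\gcd(i_1,i_2)=1$. Then for all sufficiently large $D$ there exist integers $d_1,d_2>0$ with $\gcd(d_1,d_2)=1$ and $D=i_1d_1+i_2d_2$ such that \[ \Big|d_1-\frac{r_1D}{i_1r_1+i_2r_2}\Big|\le i_2J(D)\quad\text{and}\quad\Big|d_2-\frac{r_2D}{i_1r_1+i_2r_2}\Big|\le i_1J(D). \]
   Context: $J(D)$ is Jacobsthal's function: the minimal integer such that every interval of this length contains an integer coprime to $D$. *)

theory Defs
  imports Complex_Main
begin

definition jacobsthal :: "int \<Rightarrow> nat" where
  "jacobsthal D = (LEAST m. \<forall>a::int. \<exists>k\<in>{a..<a + int m}. coprime k D)"

end

theory Submission
  imports Defs "HOL-Computational_Algebra.Primes"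
begin



definition cnt :: "nat set \<Rightarrow> int \<Rightarrow> int \<Rightarrow> nat" where
  "cnt S a b = card {k\<in>{a..<b}. \<forall>p\<in>S. \<not> int p dvd k}"

lemma mult_interval:
  fixes p :: nat and a b :: int
  assumes "p > 0"
  shows "{k\<in>{a..<b}. int p dvd k \<and> Q k} = (\<lambda>j. int p * j) ` {j\<in>{ \<lceil>real_of_int a / p\<rceil> ..< \<lceil>real_of_int b / p\<rceil> }. Q (int p * j)}"
proof -
  have A: "a \<le> int p * j \<longleftrightarrow> \<lceil>real_of_int a / p\<rceil> \<le> j" for j
  proof -
    have "a \<le> int p * j \<longleftrightarrow> real_of_int a \<le> real_of_int (int p * j)" by linarith
    also have "\<dots> \<longleftrightarrow> real_of_int a / p \<le> real_of_int j" using assms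
      by (simp add: pos_divide_le_eq mult.commute)
    finally show ?thesis by (simp add: ceiling_le_iff)
  qed
  have B: "int p * j < b \<longleftrightarrow> j < \<lceil>real_of_int b / p\<rceil>" for j
  proof -
    have "int p * j < b \<longleftrightarrow> real_of_int (int p * j) < real_of_int b" by linarith
    also have "\<dots> \<longleftrightarrow> real_of_int j < real_of_int b / p" using assms
      by (simp add: pos_less_divide_eq mult.commute)
    finally show ?thesis by (simp add: less_ceiling_iff)
  qed
  show ?thesis
    apply (rule set_eqI)
    apply (auto simp: A B image_iff dvd_def)
    done
qed

lemma tri: "(e::real) = x - y - z \<Longrightarrow> \<bar>x\<bar> \<le> E \<Longrightarrow> \<bar>y\<bar> \<le> E \<Longrightarrow> \<bar>z\<bar> \<le> 1 \<Longrightarrow> \<bar>e\<bar> \<le> 2*E + 1"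
  by linarith

lemma sieve:
  assumes "finite S" "\<forall>p\<in>S. prime p"
  shows "\<forall>a b. a \<le> b \<longrightarrow> \<bar>real (cnt S a b) - real_of_int (b - a) * (\<Prod>p\<in>S. 1 - 1/real p)\<bar> \<le> 2^card S - 1"
  using assms
proof (induction S rule: finite_induct)
  case empty
  show ?case
  proof (intro allI impI)
    fix a b :: int assume "a \<le> b"
    have "{k\<in>{a..<b}. \<forall>p\<in>{}. \<not> int p dvd k} = {a..<b}" by auto
    hence "cnt {} a b = nat (b - a)" unfolding cnt_def by simp
    thus "\<bar>real (cnt {} a b) - real_of_int (b - a) * (\<Prod>p\<in>{}. 1 - 1/real p)\<bar> \<le> 2^card ({}::nat set) - 1"
      using \<open>a \<le> b\<close> by simp
  qed
next
  case (insert p S)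
  define P where "P = (\<Prod>p\<in>S. 1 - 1/real p)"
  have pp: "prime p" using insert by auto
  have P01: "0 \<le> P \<and> P \<le> 1" unfolding P_def
    using insert(4) by (auto intro!: prod_nonneg prod_le_1 simp: prime_gt_0_nat Suc_le_eq)
  have IH: "\<And>a b. a \<le> b \<Longrightarrow> \<bar>real (cnt S a b) - real_of_int (b - a) * P\<bar> \<le> 2^card S - 1"
    using insert by (auto simp: P_def)
  show ?case
  proof (intro allI impI)
    fix a b :: int assume ab: "a \<le> b"
    define lo where "lo = \<lceil>real_of_int a / p\<rceil>"
    define hi where "hi = \<lceil>real_of_int b / p\<rceil>"
    have p0: "real p > 0" using pp prime_gt_0_nat by simp
    have lohi: "lo \<le> hi" unfolding lo_def hi_def using ab p0
      by (intro ceiling_mono divide_right_mono) auto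
    have len: "\<bar>real_of_int (hi - lo) - real_of_int (b - a) / p\<bar> \<le> 1"
    proof -
      have "real_of_int a / p \<le> lo" "lo < real_of_int a / p + 1"
           "real_of_int b / p \<le> hi" "hi < real_of_int b / p + 1"
        unfolding lo_def hi_def by linarith+
      moreover have "real_of_int (b - a) / p = real_of_int b / p - real_of_int a / p"
        by (simp add: diff_divide_distrib)
      ultimately show ?thesis by simp
    qed
    define A where "A = {k\<in>{a..<b}. \<forall>q\<in>S. \<not> int q dvd k}"
    define B where "B = {k\<in>{a..<b}. int p dvd k \<and> (\<forall>q\<in>S. \<not> int q dvd k)}"
    have eq1: "{k\<in>{a..<b}. \<forall>q\<in>insert p S. \<not> int q dvd k} = A - B"
      unfolding A_def B_def by auto
    have BA: "B \<subseteq> A" "finite B" unfolding A_def B_def by (auto intro: finite_subset[of _ "{a..<b}"])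
    have dv: "(\<forall>q\<in>S. \<not> int q dvd int p * j) \<longleftrightarrow> (\<forall>q\<in>S. \<not> int q dvd j)" for j
    proof -
      have "int q dvd int p * j \<longleftrightarrow> int q dvd j" if "q \<in> S" for q
      proof -
        have qp: "prime (int q)" "prime (int p)" using that insert pp by auto
        have "q \<noteq> p" using that insert(2) by auto
        hence "\<not> int q dvd int p" using qp primes_dvd_imp_eq[of "int q" "int p"] by auto
        thus ?thesis using qp prime_dvd_mult_iff by blast
      qed
      thus ?thesis by auto
    qed
    have "B = (\<lambda>j. int p * j) ` {j\<in>{lo..<hi}. \<forall>q\<in>S. \<not> int q dvd int p * j}"
      unfolding B_def lo_def hi_def using mult_interval[of p a b] p0 by simp
    also have "\<dots> = (\<lambda>j. int p * j) ` {j\<in>{lo..<hi}. \<forall>q\<in>S. \<not> int q dvd j}"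
      using dv by simp
    finally have "card B = cnt S lo hi" unfolding cnt_def using p0
      by (simp add: card_image inj_on_def)
    hence cB: "card B = cnt S lo hi" .
    have fA: "finite A" unfolding A_def by (auto intro: finite_subset[of _ "{a..<b}"])
    have cA: "cnt S a b = card A" unfolding cnt_def A_def by simp
    have cI: "cnt (insert p S) a b = card (A - B)" unfolding cnt_def using eq1 by simp
    have c: "cnt (insert p S) a b = cnt S a b - cnt S lo hi" "cnt S lo hi \<le> cnt S a b"
      using cA cI cB card_Diff_subset[OF BA(2) BA(1)] card_mono[OF fA BA(1)] by auto
    have I1: "\<bar>real (cnt S a b) - real_of_int (b - a) * P\<bar> \<le> 2^card S - 1" using IH ab .
    have I2: "\<bar>real (cnt S lo hi) - real_of_int (hi - lo) * P\<bar> \<le> 2^card S - 1" using IH lohi .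
    have I3: "\<bar>(real_of_int (hi - lo) - real_of_int (b - a) / p) * P\<bar> \<le> 1"
      using len P01 by (simp add: abs_mult mult_le_one)
    have prodeq: "(\<Prod>q\<in>insert p S. 1 - 1/real q) = (1 - 1/p) * P"
      using insert by (simp add: P_def)
    have "real (cnt (insert p S) a b) - real_of_int (b - a) * ((1 - 1/p) * P)
      = (real (cnt S a b) - real_of_int (b - a) * P) - (real (cnt S lo hi) - real_of_int (hi - lo) * P)
        - (real_of_int (hi - lo) - real_of_int (b - a) / p) * P"
      using c by (simp add: of_nat_diff algebra_simps diff_divide_distrib)
    hence "\<bar>real (cnt (insert p S) a b) - real_of_int (b - a) * ((1 - 1/p) * P)\<bar> \<le> 2 * 2^card S - 1"
      using tri[OF _ I1 I2 I3] by simp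
    thus "\<bar>real (cnt (insert p S) a b) - real_of_int (b - a) * (\<Prod>q\<in>insert p S. 1 - 1/real q)\<bar> \<le> 2^card (insert p S) - 1"
      unfolding prodeq using insert(1,2) by simp
  qed
qed



lemma g_bound:
  fixes p :: nat assumes "prime p"
  shows "((1 - 1/real p)/2)^2 * p \<ge> 1/8" "p > 5 \<Longrightarrow> ((1 - 1/real p)/2)^2 * p \<ge> 1"
proof -
  have p2: "real p \<ge> 2" using prime_ge_2_nat[OF assms] by simp
  have eq: "((1 - 1/real p)/2)^2 * p = (real p - 1)^2 / (4 * real p)"
    using p2 by (simp add: field_simps power2_eq_square)
  have "(real p - 1) * (real p - 1) \<ge> 1 * (real p - 1)" using p2 by (intro mult_right_mono) auto
  hence "(real p - 1)^2 \<ge> real p - 1" by (simp add: power2_eq_square)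
  hence "8 * (real p - 1)^2 \<ge> 4 * real p" using p2 by linarith
  hence "(real p - 1)^2 / (4 * real p) \<ge> 1/8" using p2 by (simp add: field_simps)
  thus "((1 - 1/real p)/2)^2 * p \<ge> 1/8" using eq by simp
  assume "p > 5"
  hence p6: "real p \<ge> 6" by simp
  have "(real p - 1) * (real p - 1) \<ge> 5 * (real p - 1)" using p6 by (intro mult_right_mono) auto
  hence "(real p - 1)^2 \<ge> 5 * (real p - 1)" by (simp add: power2_eq_square)
  moreover have "5 * (real p - 1) \<ge> 4 * real p" using p6 by (simp add: algebra_simps)
  ultimately have "(real p - 1)^2 \<ge> 4 * real p" by linarith
  hence "(real p - 1)^2 / (4 * real p) \<ge> 1" using p6 by (simp add: field_simps)
  thus "((1 - 1/real p)/2)^2 * p \<ge> 1" using eq by simp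
qed

lemma prod_g:
  assumes "finite S" "\<forall>p\<in>S. prime p"
  shows "(\<Prod>p\<in>S. ((1 - 1/real p)/2)^2 * p) \<ge> (1/8)^6"
proof -
  define g where "g p = ((1 - 1/real p)/2)^2 * p" for p
  have gpos: "g p \<ge> 1/8" if "p \<in> S" for p
  proof -
    have "prime p" using assms(2) that by blast
    thus ?thesis unfolding g_def by (rule g_bound(1))
  qed
  have g1: "g p \<ge> 1" if "p \<in> S - {..5}" for p
  proof -
    have "prime p" "p > 5" using assms(2) that by auto
    thus ?thesis unfolding g_def by (intro g_bound(2))
  qed
  define X where "X = (\<Prod>p\<in>S \<inter> {..5}. g p)"
  define Y where "Y = (\<Prod>p\<in>S - {..5}. g p)"
  have A: "(\<Prod>p\<in>S. g p) = X * Y"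
    unfolding X_def Y_def using assms(1) by (simp add: prod.Int_Diff)
  have B: "Y \<ge> 1" unfolding Y_def by (rule prod_ge_1) (rule g1)
  have C: "X \<ge> (\<Prod>p\<in>S \<inter> {..5}. 1/8)" unfolding X_def
    by (rule prod_mono) (use gpos in auto)
  have D: "(\<Prod>p\<in>S \<inter> {..5::nat}. (1/8::real)) \<ge> (1/8)^6"
  proof -
    have "card (S \<inter> {..5::nat}) \<le> card {..5::nat}" by (rule card_mono) auto
    hence "card (S \<inter> {..5::nat}) \<le> 6" by simp
    hence "(1/8::real)^6 \<le> (1/8)^card (S \<inter> {..5::nat})"
      by (intro power_decreasing) auto
    thus ?thesis by simp
  qed
  have "(0::real) \<le> (1/8)^6" by simp
  hence X0: "X \<ge> 0" using C D by linarith
  have "X * 1 \<le> X * Y" using X0 B by (intro mult_left_mono) auto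
  hence "(\<Prod>p\<in>S. g p) \<ge> (1/8)^6" using A C D by linarith
  thus ?thesis by (simp add: g_def)
qed
lemma prod_pf_le: "n > 0 \<Longrightarrow> (\<Prod>p\<in>prime_factors n. p) \<le> (n::nat)"
proof -
  assume n: "n > 0"
  have "(\<Prod>p\<in>prime_factors n. p) \<le> (\<Prod>p\<in>prime_factors n. p ^ multiplicity p n)"
  proof (rule prod_mono, safe)
    fix p assume "p \<in> prime_factors n"
    hence "multiplicity p n > 0" "prime p" using n prime_factors_multiplicity by auto
    hence "multiplicity p n > 0" "p > 0" by (auto simp: prime_gt_0_nat)
    thus "p \<le> p ^ multiplicity p n" by (simp add: self_le_power)
  qed
  also have "\<dots> = n" using prod_prime_factors[of n] n by simp
  finally show ?thesis .
qed

lemma growth: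
  assumes "n > 0"
  shows "(real n * (\<Prod>p\<in>prime_factors n. 1 - 1/real p) / 2^card (prime_factors n))^2 \<ge> (1/8)^6 * real n"
proof -
  define S where "S = prime_factors n"
  have fS: "finite S" "\<forall>p\<in>S. prime p" unfolding S_def by auto
  define Q where "Q = (\<Prod>p\<in>S. (1 - 1/real p)/2)"
  have Qeq: "Q = (\<Prod>p\<in>S. 1 - 1/real p) / 2^card S"
    unfolding Q_def by (simp add: prod_dividef)
  have G: "(\<Prod>p\<in>S. ((1 - 1/real p)/2)^2 * p) = Q^2 * (\<Prod>p\<in>S. real p)"
    unfolding Q_def by (simp add: prod.distrib prod_power_distrib)
  have "real (\<Prod>p\<in>S. p) \<le> real n" using prod_pf_le[OF assms] unfolding S_def by (simp only: of_nat_le_iff)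
  hence R1: "(\<Prod>p\<in>S. real p) \<le> real n" by (simp only: of_nat_prod)
  have R2: "Q^2 * (\<Prod>p\<in>S. real p) \<ge> (1/8)^6" using prod_g[OF fS] G by simp
  have "Q^2 * (\<Prod>p\<in>S. real p) \<le> Q^2 * real n" using R1 by (intro mult_left_mono) auto
  hence R3: "Q^2 * real n \<ge> (1/8)^6" using R2 by linarith
  hence "real n * (1/8)^6 \<le> real n * (Q^2 * real n)" by (intro mult_left_mono) auto
  moreover have "(real n * (\<Prod>p\<in>S. 1 - 1/real p) / 2^card S)^2 = real n * (Q^2 * real n)"
    unfolding Qeq by (simp add: power2_eq_square)
  ultimately show ?thesis unfolding S_def by (simp add: mult.commute)
qed

lemma coprime_of_noprime:
  assumes n: "n > 0" and h: "\<forall>p\<in>prime_factors n. \<not> int p dvd k"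
  shows "coprime k (int n)"
proof (rule ccontr)
  assume "\<not> coprime k (int n)"
  then obtain c where c: "c dvd k" "c dvd int n" "\<not> is_unit c" by (rule not_coprimeE)
  have c0: "c \<noteq> 0"
  proof
    assume "c = 0"
    with c(2) have "int n = 0" by simp
    with n show False by simp
  qed
  have "\<exists>b. b dvd c \<and> prime b" by (rule prime_divisor_exists[OF c0 c(3)])
  then obtain q where q: "q dvd c" "prime q" by (elim exE conjE)
  have q0: "q > 0" using q(2) by (rule prime_gt_0_int)
  hence qq: "int (nat q) = q" by simp
  have pq: "prime (nat q)" using q(2) qq by (metis prime_nat_int_transfer)
  have "int (nat q) dvd int n" unfolding qq using q(1) c(2) by (rule dvd_trans)
  hence "nat q dvd n" by (simp only: of_nat_dvd_iff)
  hence "nat q \<in> prime_factors n" using pq n by (intro prime_factorsI) auto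
  moreover have "int (nat q) dvd k" unfolding qq using q(1) c(1) by (rule dvd_trans)
  ultimately show False using h by blast
qed
lemma key:
  assumes rho: "\<rho> > 0"
  shows "\<exists>N::nat. \<forall>n\<ge>N. \<forall>a::int. \<exists>k\<in>{a..<a + \<lfloor>\<rho> * real n\<rfloor>}. coprime k (int n)"
proof -
  define c :: real where "c = (1/8)^6"
  have c0: "c > 0" by (simp add: c_def)
  define N where "N = nat \<lceil>1/(c * \<rho>^2)\<rceil> + 1"
  show ?thesis
  proof (intro exI allI impI)
    fix n :: nat and a :: int assume nN: "N \<le> n"
    have "real n \<ge> real N" using nN by simp
    moreover have "real N > 1/(c * \<rho>^2)" unfolding N_def by linarith
    ultimately have nbig: "real n > 1/(c * \<rho>^2)" by linarith
    have n0: "n > 0" using nN N_def by simp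
    hence "c * \<rho>^2 * real n > 1" using nbig c0 rho by (simp add: field_simps)
    define S where "S = prime_factors n"
    have fS: "finite S" "\<forall>p\<in>S. prime p" by (auto simp: S_def)
    define P where "P = (\<Prod>p\<in>S. 1 - 1/real p)"
    have P01: "0 \<le> P" "P \<le> 1" unfolding P_def
      using fS by (auto intro!: prod_nonneg prod_le_1 simp: prime_gt_0_nat Suc_le_eq)
    define w :: real where "w = 2^card S"
    have w1: "w \<ge> 1" by (simp add: w_def)
    define X where "X = real n * P / w"
    have X0: "X \<ge> 0" using P01 w1 by (simp add: X_def)
    have "X^2 \<ge> c * real n" using growth[OF n0] unfolding X_def P_def w_def S_def c_def by simp
    hence "\<rho>^2 * X^2 \<ge> \<rho>^2 * (c * real n)" by (intro mult_left_mono) auto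
    hence "(\<rho> * X)^2 \<ge> \<rho>^2 * (c * real n)" by (simp add: power_mult_distrib)
    moreover have "\<rho>^2 * (c * real n) > 1" using \<open>c * \<rho>^2 * real n > 1\<close> by (simp add: algebra_simps)
    ultimately have "(\<rho> * X)^2 > 1" by linarith
    hence "\<rho> * X > 1" using X0 rho
      by (smt (verit, best) mult_nonneg_nonneg one_power2 power_mono)
    hence big: "\<rho> * real n * P > w" unfolding X_def using w1 by (simp add: field_simps)
    have rn1: "\<rho> * real n > 1"
    proof -
      have "\<rho> * real n * P \<le> \<rho> * real n * 1" if "\<rho> * real n \<ge> 0"
        using P01 that by (intro mult_left_mono) auto
      thus ?thesis using big w1 rho by (smt (verit) mult_nonneg_nonneg of_nat_0_le_iff)
    qed
    define m where "m = \<lfloor>\<rho> * real n\<rfloor>"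
    have m0: "m \<ge> 0" using rn1 by (simp add: m_def)
    have mlow: "real_of_int m \<ge> \<rho> * real n - 1" unfolding m_def by linarith
    have sv: "\<bar>real (cnt S a (a + m)) - real_of_int (a + m - a) * P\<bar> \<le> 2^card S - 1"
      using sieve[OF fS, rule_format, of a "a + m"] m0 unfolding P_def by simp
    have "real_of_int m * P \<ge> (\<rho> * real n - 1) * P" using mlow P01 by (intro mult_right_mono) auto
    hence "real (cnt S a (a + m)) > 0" using sv big P01 unfolding w_def
      by (simp add: algebra_simps)
    hence "card {k\<in>{a..<a+m}. \<forall>p\<in>S. \<not> int p dvd k} > 0" by (simp add: cnt_def)
    then obtain k where k: "k \<in> {a..<a+m}" "\<forall>p\<in>S. \<not> int p dvd k"
      by (metis (no_types, lifting) card_gt_0_iff ex_in_conv mem_Collect_eq)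
    have "coprime k (int n)" using coprime_of_noprime[OF n0] k(2) unfolding S_def by blast
    thus "\<exists>k\<in>{a..<a + \<lfloor>\<rho> * real n\<rfloor>}. coprime k (int n)" using k(1) unfolding m_def by blast
  qed
qed




lemma jac_prop:
  assumes "D \<ge> 1"
  shows "\<forall>a::int. \<exists>k\<in>{a..<a + int (jacobsthal D)}. coprime k D"
proof -
  have ex: "\<forall>a::int. \<exists>k\<in>{a..<a + int (nat D)}. coprime k D"
  proof
    fix a :: int
    define k where "k = a + ((1 - a) mod D)"
    have "k \<in> {a..<a + int (nat D)}" using assms by (simp add: k_def)
    moreover have "coprime k D"
    proof (rule coprimeI)
      fix c assume c: "c dvd k" "c dvd D"
      define t where "t = (1 - a) div D"
      have "(1 - a) = D * t + (1 - a) mod D" unfolding t_def by simp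
      hence "k + D * t = 1" unfolding k_def by (simp add: algebra_simps)
      moreover have "c dvd k + D * t" using c by simp
      ultimately have "c dvd 1" by simp
      thus "is_unit c" by simp
    qed
    ultimately show "\<exists>k\<in>{a..<a + int (nat D)}. coprime k D" by blast
  qed
  show ?thesis unfolding jacobsthal_def by (rule LeastI[of _ "nat D"]) (rule ex)
qed

lemma jac_le:
  assumes "\<forall>a::int. \<exists>k\<in>{a..<a + int m}. coprime k D"
  shows "jacobsthal D \<le> m"
  unfolding jacobsthal_def by (rule Least_le) (rule assms)




theorem lemma3p3:
  fixes r1 r2 :: real and i1 i2 :: int
  assumes "r1 > 0" "r2 > 0" "i1 > 0" "i2 > 0" "coprime i1 i2"
  shows "\<exists>D0::int. \<forall>D\<ge>D0. \<exists>d1 d2::int. d1 > 0 \<and> d2 > 0 \<and> coprime d1 d2 \<and>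
           D = i1 * d1 + i2 * d2 \<and>
           \<bar>real_of_int d1 - r1 * real_of_int D / (real_of_int i1 * r1 + real_of_int i2 * r2)\<bar>
              \<le> real_of_int i2 * real (jacobsthal D) \<and>
           \<bar>real_of_int d2 - r2 * real_of_int D / (real_of_int i1 * r1 + real_of_int i2 * r2)\<bar>
              \<le> real_of_int i1 * real (jacobsthal D)"
proof -
  define s where "s = real_of_int i1 * r1 + real_of_int i2 * r2"
  have s0: "s > 0" unfolding s_def using assms by (simp add: add_pos_pos)
  define \<rho> where "\<rho> = r2 / (real_of_int i1 * s)"
  have rho0: "\<rho> > 0" unfolding \<rho>_def using assms s0 by simp
  obtain N where N: "\<forall>n\<ge>N. \<forall>a::int. \<exists>k\<in>{a..<a + \<lfloor>\<rho> * real n\<rfloor>}. coprime k (int n)"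
    using key[OF rho0] by blast
  obtain u' v' where uv': "u' * i1 + v' * i2 = gcd i1 i2" using bezout_int by blast
  define u where "u = v'"
  define v where "v = - u'"
  have uv: "u * i2 - v * i1 = 1" using uv' assms(5) unfolding u_def v_def by (simp add: algebra_simps)
  show ?thesis
  proof (rule exI[of _ "max (int N) 1"], intro allI impI)
    fix D :: int assume DD: "max (int N) 1 \<le> D"
    have D1: "D \<ge> 1" using DD by simp
    define n where "n = nat D"
    have Dn: "D = int n" "n \<ge> N" using DD D1 by (auto simp: n_def)
    define J where "J = jacobsthal D"
    have rD: "\<rho> * real_of_int D > 0" using rho0 D1 by simp
    have Jle: "real J \<le> \<rho> * real_of_int D"
    proof -
      have "\<forall>a::int. \<exists>k\<in>{a..<a + int (nat \<lfloor>\<rho> * real_of_int D\<rfloor>)}. coprime k D"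
        using N Dn rD by simp
      hence "J \<le> nat \<lfloor>\<rho> * real_of_int D\<rfloor>" unfolding J_def by (rule jac_le)
      thus ?thesis using rD by linarith
    qed
    define x where "x = r1 * real_of_int D / s"
    define y where "y = r2 * real_of_int D / s"
    have xy: "real_of_int i1 * x + real_of_int i2 * y = real_of_int D"
    proof -
      have "real_of_int i1 * x + real_of_int i2 * y = real_of_int D * (real_of_int i1 * r1 + real_of_int i2 * r2) / s"
        unfolding x_def y_def by (simp add: add_divide_distrib algebra_simps)
      hence "real_of_int i1 * x + real_of_int i2 * y = real_of_int D * s / s" unfolding s_def by simp
      thus ?thesis using s0 by simp
    qed
    have x0: "x > 0" unfolding x_def using assms s0 D1 by simp
    have yJ: "real_of_int i1 * real J \<le> y"
    proof -
      have "real_of_int i1 * real J \<le> real_of_int i1 * (\<rho> * real_of_int D)"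
        using Jle assms by (intro mult_left_mono) auto
      also have "\<dots> = y" unfolding \<rho>_def y_def using assms s0 by (simp add: field_simps)
      finally show ?thesis .
    qed
    define ns where "ns = (x + real_of_int (v * D)) / real_of_int i2"
    have ns_eq: "real_of_int i2 * ns = x + real_of_int (v * D)" unfolding ns_def using assms by simp
    obtain k where k: "k \<in> {\<lceil>ns\<rceil>..<\<lceil>ns\<rceil> + int J}" "coprime k D"
      using jac_prop[OF D1] unfolding J_def by blast
    have kk: "0 \<le> real_of_int k - ns" "real_of_int k - ns < real J"
      using k(1) by auto linarith+
    define d1 where "d1 = i2 * k - v * D"
    define d2 where "d2 = u * D - i1 * k"
    have Dsum: "D = i1 * d1 + i2 * d2"
    proof -
      have "i1 * d1 + i2 * d2 = D * (u * i2 - v * i1)" unfolding d1_def d2_def by (simp add: algebra_simps)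
      thus ?thesis using uv by simp
    qed
    have ksum: "u * d1 + v * d2 = k" 
    proof -
      have "u * d1 + v * d2 = k * (u * i2 - v * i1)" unfolding d1_def d2_def by (simp add: algebra_simps)
      thus ?thesis using uv by simp
    qed
    have e1: "real_of_int d1 - x = real_of_int i2 * (real_of_int k - ns)"
      unfolding d1_def using ns_eq by (simp add: algebra_simps)
    have "real_of_int i2 * (real_of_int d2 - y) = - real_of_int i1 * (real_of_int d1 - x)"
    proof -
      have "real_of_int D = real_of_int i1 * real_of_int d1 + real_of_int i2 * real_of_int d2"
        using Dsum by (metis of_int_add of_int_mult)
      thus ?thesis using xy by (simp add: algebra_simps)
    qed
    hence e2: "real_of_int d2 - y = - real_of_int i1 * (real_of_int k - ns)"
      using e1 assms(4) by (smt (verit, ccfv_threshold) mult.left_commute mult_cancel_left of_int_0_less_iff)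
    have i1p: "real_of_int i1 > 0" and i2p: "real_of_int i2 > 0" using assms by auto
    have b1: "0 \<le> real_of_int d1 - x" "real_of_int d1 - x \<le> real_of_int i2 * real J"
      unfolding e1 using kk i2p by (auto intro: mult_left_mono less_imp_le)
    have b2a: "real_of_int i1 * (real_of_int k - ns) < real_of_int i1 * real J"
      using kk i1p by simp
    have b2b: "0 \<le> real_of_int i1 * (real_of_int k - ns)" using kk i1p by simp
    have d1p: "d1 > 0" using b1 x0 by linarith
    have d2p: "d2 > 0" using e2 b2a yJ by linarith
    have cop: "coprime d1 d2"
    proof (rule coprimeI)
      fix c assume c: "c dvd d1" "c dvd d2"
      have "c dvd k" using c ksum by (metis dvd_add dvd_mult)
      moreover have "c dvd D" using c Dsum by (metis dvd_add dvd_mult)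
      ultimately show "is_unit c" using k(2) coprime_common_divisor by blast
    qed
    have a1: "\<bar>real_of_int d1 - x\<bar> \<le> real_of_int i2 * real J" using b1 by simp
    have a2: "\<bar>real_of_int d2 - y\<bar> \<le> real_of_int i1 * real J" using e2 b2a b2b by simp
    show "\<exists>d1 d2::int. d1 > 0 \<and> d2 > 0 \<and> coprime d1 d2 \<and>
           D = i1 * d1 + i2 * d2 \<and>
           \<bar>real_of_int d1 - r1 * real_of_int D / (real_of_int i1 * r1 + real_of_int i2 * r2)\<bar>
              \<le> real_of_int i2 * real (jacobsthal D) \<and>
           \<bar>real_of_int d2 - r2 * real_of_int D / (real_of_int i1 * r1 + real_of_int i2 * r2)\<bar>
              \<le> real_of_int i1 * real (jacobsthal D)"
      using d1p d2p cop Dsum a1 a2 unfolding x_def y_def s_def J_def by blast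
  qed
qed



end
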